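(* For $\tau\in(0,\tfrac1{3\sqrt3})$ and all $t\in\mathbb{R}$, $2\tau=y_\tau(t)\sqrt{1-y_\tau(t)}\,\cos\big(\psi_1(t)+2\psi_2(t)\big)$; moreover $\psi_1(t)+2\psi_2(t)\in(-\tfrac\pi2,\tfrac\pi2)$ for all $t$, and $\psi_1(p_\tau)+2\psi_2(p_\tau)=0$.
   Context: $y_\tau$ solves $\ddot y=-2y(3y-2)$, $y(0)=y_{\max}$, $\dot y(0)=0$, where $y_{\max}$ is the largest root of $y^3-y^2+4\tau^2$; it satisfies $\dot y^2=-4(y^3-y^2+4\tau^2)$, is even, and is periodic of period $2p_\tau$, attaining its minimum at $t=p_\tau$. $\psi_1,\psi_2$ solve $(1-y_\tau)\dot\psi_1=2\tau$, $y_\tau\dot\psi_2=-2\tau$, $\psi_1(0)=\psi_2(0)=0$. *)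

theory Defs
  imports Complex_Main
begin

definition is_ymax :: "real \<Rightarrow> real \<Rightarrow> bool" where
  "is_ymax \<tau> m \<longleftrightarrow> m^3 - m^2 + 4*\<tau>^2 = 0 \<and> (\<forall>r. r^3 - r^2 + 4*\<tau>^2 = 0 \<longrightarrow> r \<le> m)"

end

theory Submission
  imports Defs
begin

theorem mainTheorem7:
  fixes \<tau> p :: real and y y' \<psi>1 \<psi>2 \<psi>1' \<psi>2' :: "real \<Rightarrow> real"
  assumes tau: "0 < \<tau>" "\<tau> < 1 / (3 * sqrt 3)"
    and y_deriv: "\<And>t. (y has_real_derivative y' t) (at t)"
    and y'_deriv: "\<And>t. (y' has_real_derivative (-2 * y t * (3 * y t - 2))) (at t)"
    and y_init: "is_ymax \<tau> (y 0)" "y' 0 = 0"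
    and psi1_deriv: "\<And>t. (\<psi>1 has_real_derivative \<psi>1' t) (at t)"
    and psi1_eq: "\<And>t. (1 - y t) * \<psi>1' t = 2 * \<tau>"
    and psi2_deriv: "\<And>t. (\<psi>2 has_real_derivative \<psi>2' t) (at t)"
    and psi2_eq: "\<And>t. y t * \<psi>2' t = - 2 * \<tau>"
    and psi_init: "\<psi>1 0 = 0" "\<psi>2 0 = 0"
    and p_pos: "0 < p"
    and p_period: "\<And>t. y (t + 2 * p) = y t"
    and p_minimal: "\<And>q. 0 < q \<Longrightarrow> q < 2 * p \<Longrightarrow> \<not> (\<forall>t. y (t + q) = y t)"
    and p_min: "\<And>t. y p \<le> y t"
  shows "(\<forall>t. 2 * \<tau> = y t * sqrt (1 - y t) * cos (\<psi>1 t + 2 * \<psi>2 t))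
       \<and> (\<forall>t. \<psi>1 t + 2 * \<psi>2 t \<in> {- pi / 2 <..< pi / 2})
       \<and> \<psi>1 p + 2 * \<psi>2 p = 0"
proof -
  define f :: "real \<Rightarrow> real" where "f r = r^3 - r^2 + 4*\<tau>^2" for r
  have cont: "continuous_on UNIV f" unfolding f_def by (intro continuous_intros)
  have tau2: "\<tau>^2 < 1/27"
  proof -
    have "\<tau>^2 < (1 / (3 * sqrt 3))^2" using tau by (intro power_strict_mono) auto
    also have "\<dots> = 1/27" by (simp add: power2_eq_square field_simps)
    finally show ?thesis .
  qed
  have "f 1 \<ge> 0" "f (2/3) \<le> 0" using tau2 by (auto simp: f_def power2_eq_square power3_eq_cube)
  then obtain r where r: "2/3 \<le> r" "r \<le> 1" "f r = 0"
    using IVT'[of f "2/3" 0 1] cont by (auto intro: continuous_on_subset)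
  have y0pos: "y 0 > 0" using y_init(1) r unfolding is_ymax_def f_def by force
  define E where "E t = (y' t)^2 + 4 * (y t)^3 - 4 * (y t)^2" for t
  have Ed: "(E has_real_derivative 0) (at t)" for t
  proof -
    have "(E has_real_derivative (2 * y' t * (-2 * y t * (3 * y t - 2)) + 4 * (3 * (y t)^2 * y' t) - 4 * (2 * y t * y' t))) (at t)"
      unfolding E_def[abs_def]
      by (rule derivative_eq_intros y_deriv y'_deriv refl | simp)+
    moreover have "2 * y' t * (-2 * y t * (3 * y t - 2)) + 4 * (3 * (y t)^2 * y' t) - 4 * (2 * y t * y' t) = 0"
      by (simp add: algebra_simps power2_eq_square)
    ultimately show ?thesis by simp
  qed
  have Eval: "E t = -16 * \<tau>^2" for t
  proof -
    have "E t = E 0" using DERIV_isconst_all[of E] Ed by blast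
    also have "\<dots> = -16 * \<tau>^2" using y_init unfolding is_ymax_def E_def by simp
    finally show ?thesis .
  qed
  have en: "(y' t)^2 = 4 * (y t)^2 * (1 - y t) - 16 * \<tau>^2" for t
    using Eval[of t] unfolding E_def by (simp add: algebra_simps power2_eq_square power3_eq_cube)
  have yne0: "y t \<noteq> 0" for t using psi2_eq[of t] tau by auto
  have ycont: "continuous_on UNIV y" using y_deriv
    by (meson DERIV_isCont continuous_at_imp_continuous_on)
  have ypos: "y t > 0" for t
  proof (rule ccontr)
    assume "\<not> y t > 0"
    hence neg: "y t \<le> 0" by simp
    show False
    proof (cases "t \<le> 0")
      case True
      obtain x where "t \<le> x" "x \<le> 0" "y x = 0"
        using IVT'[of y t 0 0] True neg y0pos ycont by (auto intro: continuous_on_subset)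
      thus False using yne0 by blast
    next
      case False
      obtain x where "0 \<le> x" "x \<le> t" "y x = 0"
        using IVT2'[of y t 0 0] False neg y0pos ycont by (auto intro: continuous_on_subset)
      thus False using yne0 by blast
    qed
  qed
  have ylt1: "y t < 1" for t
  proof -
    have "4 * (y t)^2 * (1 - y t) > 0" using en[of t] tau
      by (smt (verit) zero_le_power2 mult_pos_pos zero_less_power)
    thus ?thesis using ypos[of t] by (smt (verit) mult_nonneg_nonpos zero_le_power2 mult_nonneg_nonneg)
  qed
  define \<theta> where "\<theta> t = \<psi>1 t + 2 * \<psi>2 t" for t
  define \<phi> where "\<phi> t = - arctan (y' t / (4 * \<tau>))" for t
  have \<theta>d: "(\<theta> has_real_derivative (\<psi>1' t + 2 * \<psi>2' t)) (at t)" for t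
    unfolding \<theta>_def[abs_def] by (rule derivative_eq_intros psi1_deriv psi2_deriv refl | simp)+
  have \<phi>d: "(\<phi> has_real_derivative (- (inverse (1 + (y' t / (4 * \<tau>))^2) * ((-2 * y t * (3 * y t - 2)) / (4 * \<tau>))))) (at t)" for t
    unfolding \<phi>_def[abs_def]
    by (rule DERIV_minus DERIV_chain2[OF DERIV_arctan] DERIV_cdivide y'_deriv)+
  have deq: "\<psi>1' t + 2 * \<psi>2' t = - (inverse (1 + (y' t / (4 * \<tau>))^2) * ((-2 * y t * (3 * y t - 2)) / (4 * \<tau>)))" for t
  proof -
    have a: "\<psi>1' t = 2 * \<tau> / (1 - y t)" using psi1_eq[of t] ylt1[of t] by (simp add: field_simps)
    have b: "\<psi>2' t = - 2 * \<tau> / y t" using psi2_eq[of t] ypos[of t] by (simp add: field_simps)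
    have c0: "1 + (y' t / (4 * \<tau>))^2 = (16 * \<tau>^2 + (y' t)^2) / (16 * \<tau>^2)"
      using tau by (simp add: field_simps power_divide)
    have c: "1 + (y' t / (4 * \<tau>))^2 = (y t)^2 * (1 - y t) / (4 * \<tau>^2)"
      unfolding c0 en[of t] using tau by (simp add: field_simps)
    have "y t * (1 - y t) > 0" using ypos[of t] ylt1[of t] by simp
    thus ?thesis unfolding a b c using tau ypos[of t] ylt1[of t]
      by (simp add: field_simps power2_eq_square)
  qed
  have same: "\<theta> t = \<phi> t" for t
  proof -
    have "((\<lambda>t. \<theta> t - \<phi> t) has_real_derivative 0) (at t)" for t
      using DERIV_diff[OF \<theta>d[of t] \<phi>d[of t]] deq[of t] by simp
    hence "\<theta> t - \<phi> t = \<theta> 0 - \<phi> 0" using DERIV_isconst_all[of "\<lambda>t. \<theta> t - \<phi> t"] by blast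
    also have "\<dots> = 0" unfolding \<theta>_def \<phi>_def using psi_init y_init by simp
    finally show ?thesis by simp
  qed
  have part1: "2 * \<tau> = y t * sqrt (1 - y t) * cos (\<psi>1 t + 2 * \<psi>2 t)" for t
  proof -
    have c0: "1 + (y' t / (4 * \<tau>))^2 = (16 * \<tau>^2 + (y' t)^2) / (16 * \<tau>^2)"
      using tau by (simp add: field_simps power_divide)
    have c: "1 + (y' t / (4 * \<tau>))^2 = (y t * sqrt (1 - y t) / (2 * \<tau>))^2"
      unfolding c0 en[of t] using tau ylt1[of t] by (simp add: field_simps power_mult_distrib power_divide)
    have pos: "y t * sqrt (1 - y t) / (2 * \<tau>) > 0" using ypos[of t] ylt1[of t] tau by simp
    have "cos (\<psi>1 t + 2 * \<psi>2 t) = cos (\<phi> t)" using same[of t] unfolding \<theta>_def by simp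
    also have "\<dots> = 1 / sqrt (1 + (y' t / (4 * \<tau>))^2)" unfolding \<phi>_def by (simp add: cos_arctan)
    also have "\<dots> = 2 * \<tau> / (y t * sqrt (1 - y t))" unfolding c using pos tau ypos[of t] ylt1[of t] by simp
    finally show ?thesis using pos tau ypos[of t] ylt1[of t] by (simp add: field_simps)
  qed
  have part2: "\<psi>1 t + 2 * \<psi>2 t \<in> {- pi / 2 <..< pi / 2}" for t
    using same[of t] arctan_bounded[of "y' t / (4 * \<tau>)"] unfolding \<theta>_def \<phi>_def by auto
  have "y' p = 0"
    by (rule DERIV_local_min[OF y_deriv, of 1]) (auto simp: p_min)
  hence part3: "\<psi>1 p + 2 * \<psi>2 p = 0" using same[of p] unfolding \<theta>_def \<phi>_def by simp
  show ?thesis using part1 part2 part3 by blast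
qed

end
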